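(* Let $G=([n],E)$ be a finite simple loopless undirected graph and let $S_G=\mathrm{span}\{\ket{i}\!\bra{j}:\ i=j\in[n]\ \text{or}\ \{i,j\}\in E\}\subseteq M_n$. Then $\mathcal{H}(S_G)=\mathcal{H}(G)$.
   Context: All scalars are complex; $M_{n\times m}$ denotes complex $n\times m$ matrices, $M_n=M_{n\times n}$, and $\ket{i}$ is the $i$-th standard basis vector. For a linear subspace $S\subseteq M_n$, $M_m(S)$ denotes the set of $m\times m$ block matrices $B=[B_{i,j}]_{i,j\in[m]}$ with every block $B_{i,j}\in S$, viewed as elements of $M_{mn}$. A noncommutative graph is a linear subspace $S\subseteq M_n$ that contains $I_n$ and is closed under conjugate transpose. The Haemers bound of a noncommutative graph $S\subseteq M_n$ is $\mathcal{H}(S)=\min\{\mathrm{rk}(B):\ m\in\mathbb{N},\ B\in M_m(S),\ \sum_{i=1}^m B_{i,i}=I_n\}$. The Haemers bound of a graph $G=([n],E)$ (over $\mathbb{C}$) is $\mathcal{H}(G)=\min\{\mathrm{rk}(B):\ B\in M_n,\ B_{i,i}=1\ \forall i\in[n],\ B_{i,j}=0\ \text{whenever } i\neq j \text{ and } \{i,j\}\notin E\}$. *)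

theory Defs
  imports "Jordan_Normal_Form.DL_Rank"
begin

definition crank :: "complex mat \<Rightarrow> nat" where
  "crank B = vec_space.rank (dim_row B) B"

text \<open>Finite simple loopless undirected graph on vertex set [n] = {0..<n},
  given by an edge relation E (only pairs in [n] are relevant).\<close>
definition simple_graph :: "nat \<Rightarrow> (nat \<Rightarrow> nat \<Rightarrow> bool) \<Rightarrow> bool" where
  "simple_graph n E \<longleftrightarrow> (\<forall>i<n. \<forall>j<n. E i j \<longleftrightarrow> E j i) \<and> (\<forall>i<n. \<not> E i i)"

text \<open>S_G = span{ |i><j| : i = j or {i,j} in E }: exactly the n x n matrices
  supported on the diagonal and the edge positions.\<close>
definition graph_space :: "nat \<Rightarrow> (nat \<Rightarrow> nat \<Rightarrow> bool) \<Rightarrow> complex mat set" where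
  "graph_space n E = {A \<in> carrier_mat n n.
      \<forall>i<n. \<forall>j<n. \<not> (i = j \<or> E i j) \<longrightarrow> A $$ (i, j) = 0}"

definition block :: "nat \<Rightarrow> complex mat \<Rightarrow> nat \<Rightarrow> nat \<Rightarrow> complex mat" where
  "block n B i j = mat n n (\<lambda>(a, b). B $$ (i * n + a, j * n + b))"

definition haemers_nc :: "nat \<Rightarrow> complex mat set \<Rightarrow> nat" where
  "haemers_nc n S = (LEAST r. \<exists>m B. B \<in> carrier_mat (m * n) (m * n)
      \<and> (\<forall>i<m. \<forall>j<m. block n B i j \<in> S)
      \<and> mat n n (\<lambda>(a, b). \<Sum>i<m. block n B i i $$ (a, b)) = 1\<^sub>m n
      \<and> crank B = r)"

definition haemers_graph :: "nat \<Rightarrow> (nat \<Rightarrow> nat \<Rightarrow> bool) \<Rightarrow> nat" where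
  "haemers_graph n E = (LEAST r. \<exists>B. B \<in> carrier_mat n n
      \<and> (\<forall>i<n. B $$ (i, i) = 1)
      \<and> (\<forall>i<n. \<forall>j<n. i \<noteq> j \<and> \<not> E i j \<longrightarrow> B $$ (i, j) = 0)
      \<and> crank B = r)"

end

theory Submission
  imports Defs "HOL-Computational_Algebra.Polynomial"
begin


lemma (in vec_space) rank_le_span:
  assumes A: "A \<in> carrier_mat n nc" and W: "W \<in> carrier_mat n k"
    and sub: "set (cols A) \<subseteq> span (set (cols W))"
  shows "rank A \<le> rank W"
proof -
  let ?S = "span (set (cols W))"
  have Wc: "set (cols W) \<subseteq> carrier_vec n" using W cols_dim by blast
  have vs: "vectorspace class_ring (vs ?S)"
    using span_is_subspace[THEN subspace_is_vs, OF Wc] by auto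
  have sm: "submodule class_ring ?S V" using span_is_submodule[OF Wc] by simp
  have subsp: "subspace class_ring (span (set (cols A))) (vs ?S)"
    using vectorspace.span_is_subspace[OF vs, of "set (cols A)", unfolded
      span_li_not_depend(1)[OF sub sm]] sub by auto
  have fin: "vectorspace.fin_dim class_ring (vs ?S)"
       "vectorspace.fin_dim class_ring (vs ?S\<lparr>carrier := span (set (cols A))\<rparr>)"
    using fin_dim_span_cols A W by auto
  show ?thesis unfolding rank_def
    using vectorspace.subspace_dim[OF vs subsp fin(1) fin(2)] by simp
qed

lemma (in vec_space) mult_in_span:
  assumes W: "W \<in> carrier_mat n k" and v: "v \<in> carrier_vec k"
  shows "W *\<^sub>v v \<in> span (set (cols W))"
proof -
  have Wc: "set (cols W) \<subseteq> carrier_vec n" using W cols_dim by blast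
  have "lincomb_list (\<lambda>i. v $ i) (cols W) = mat_of_cols n (cols W) *\<^sub>v vec (length (cols W)) (\<lambda>i. v $ i)"
    by (rule lincomb_list_as_mat_mult) (use Wc in auto)
  also have "\<dots> = W *\<^sub>v v"
  proof -
    have 1: "mat_of_cols n (cols W) = W" using W mat_of_cols_cols[of W] by auto
    have 2: "vec (length (cols W)) (\<lambda>i. v $ i) = v" using W v by (auto intro!: eq_vecI)
    show ?thesis unfolding 1 2 ..
  qed
  finally have "W *\<^sub>v v \<in> span_list (cols W)"
    unfolding span_list_def by (auto intro!: exI[of _ "\<lambda>i. v $ i"])
  then show ?thesis using span_list_as_span[OF Wc] by simp
qed

lemma (in vec_space) rank_mult_left:
  assumes W: "W \<in> carrier_mat n k" and G: "G \<in> carrier_mat k nc"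
  shows "rank (W * G) \<le> rank W"
proof (rule rank_le_span[OF _ W])
  show "W * G \<in> carrier_mat n nc" using W G by auto
  show "set (cols (W * G)) \<subseteq> span (set (cols W))"
  proof
    fix x assume "x \<in> set (cols (W * G))"
    then obtain j where j: "j < nc" "x = col (W * G) j" using W G
      by (metis cols_length cols_nth in_set_conv_nth carrier_matD index_mult_mat(3))
    have "x = W *\<^sub>v col G j" unfolding j(2) by (rule col_mult2[OF W G j(1)])
    then show "x \<in> span (set (cols W))" using mult_in_span[OF W] G j by auto
  qed
qed

lemma (in vec_space) rank_factor:
  assumes Y: "Y \<in> carrier_mat n nc"
  shows "\<exists>F G. F \<in> carrier_mat n (rank Y) \<and> G \<in> carrier_mat (rank Y) nc \<and> Y = F * G"
proof -
  obtain U where max: "maximal U (\<lambda>T. T \<subseteq> set (cols Y) \<and> lin_indpt T)"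
    using maximal_exists[of "(\<lambda>T. T \<subseteq> set (cols Y) \<and> lin_indpt T)" "card (set (cols Y))" "{}"]
    by (meson List.finite_set card_mono empty_iff empty_subsetI finite_lin_indpt2 rev_finite_subset)
  have rk: "rank Y = card U" using rank_card_indpt[OF Y max] .
  have UY: "U \<subseteq> set (cols Y)" "lin_indpt U" using max unfolding maximal_def by auto
  have Yc: "set (cols Y) \<subseteq> carrier_vec n" using Y cols_dim by blast
  have Uc: "U \<subseteq> carrier_vec n" using UY Yc by auto
  have sp: "set (cols Y) \<subseteq> span U"
  proof
    fix c assume c: "c \<in> set (cols Y)"
    show "c \<in> span U"
    proof (cases "c \<in> U")
      case True then show ?thesis using Uc in_own_span by auto
    next
      case False
      have "\<not> lin_indpt (U \<union> {c})"
      proof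
        assume "lin_indpt (U \<union> {c})"
        then have "U \<union> {c} = U" using max c UY unfolding maximal_def by auto
        then show False using False by auto
      qed
      then show ?thesis using lin_dep_iff_in_span[OF Uc UY(2) _ False] c Yc by auto
    qed
  qed
  have finU: "finite U" using UY(1) finite_subset by blast
  obtain us where us: "set us = U" "distinct us" using finite_distinct_list[OF finU] by blast
  have len: "length us = card U" using us distinct_card by fastforce
  have usc: "set us \<subseteq> carrier_vec n" using us Uc by auto
  define F where "F = mat_of_cols n us"
  have F: "F \<in> carrier_mat n (card U)" unfolding F_def using len by auto
  have "\<forall>j<nc. \<exists>c. col Y j = F *\<^sub>v vec (card U) c"
  proof (intro allI impI)
    fix j assume j: "j < nc"
    have "col Y j \<in> set (cols Y)" using Y j by (simp add: cols_def)
    then have "col Y j \<in> span_list us" using sp span_list_as_span[OF usc] us by auto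
    then obtain c where "col Y j = lincomb_list c us" unfolding span_list_def by auto
    also have "\<dots> = F *\<^sub>v vec (card U) c" unfolding F_def len[symmetric]
      by (rule lincomb_list_as_mat_mult) (use usc in auto)
    finally show "\<exists>c. col Y j = F *\<^sub>v vec (card U) c" by blast
  qed
  then obtain c where c: "\<And>j. j < nc \<Longrightarrow> col Y j = F *\<^sub>v vec (card U) (c j)" by metis
  define G where "G = mat (card U) nc (\<lambda>(i,j). c j i)"
  have G: "G \<in> carrier_mat (card U) nc" unfolding G_def by auto
  have "Y = F * G"
  proof (rule eq_matI)
    fix i j assume i: "i < dim_row (F * G)" and j: "j < dim_col (F * G)"
    then have i': "i < n" and j': "j < nc" using F G by auto
    have cg: "col G j = vec (card U) (c j)" unfolding G_def using j' by (auto intro!: eq_vecI)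
    have "Y $$ (i, j) = col Y j $ i" using Y i' j' by auto
    also have "\<dots> = (F *\<^sub>v vec (card U) (c j)) $ i" using c j' by simp
    also have "\<dots> = (F * G) $$ (i, j)" using F G i' j' cg by simp
    finally show "Y $$ (i, j) = (F * G) $$ (i, j)" .
  qed (use Y F G in auto)
  then show ?thesis using F G rk by auto
qed

lemma crank_mult3:
  assumes X: "X \<in> carrier_mat p q" and Y: "Y \<in> carrier_mat q r" and Z: "Z \<in> carrier_mat r s"
  shows "crank (X * Y * Z) \<le> crank Y"
proof -
  obtain F G where F: "F \<in> carrier_mat q (crank Y)" and G: "G \<in> carrier_mat (crank Y) r"
    and YFG: "Y = F * G"
    using vec_space.rank_factor[OF Y] Y unfolding crank_def by auto
  have e1: "X * (F * G) = X * F * G" using assoc_mult_mat[OF X F G] by simp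
  have "X * Y * Z = (X * F) * (G * Z)" unfolding YFG e1
    using assoc_mult_mat[of "X * F" p "crank Y" G r Z s] X F G Z by auto
  moreover have "vec_space.rank p ((X * F) * (G * Z)) \<le> vec_space.rank p (X * F)"
    using vec_space.rank_mult_left[of "X * F" p "crank Y" "G * Z" s] X F G Z by auto
  moreover have "vec_space.rank p (X * F) \<le> crank Y"
    using vec_space.rank_le_nc[of "X * F" p "crank Y"] X F by auto
  moreover have "dim_row (X * Y * Z) = p" using X by simp
  ultimately show ?thesis unfolding crank_def by simp
qed



lemma mult3_index:
  assumes X: "X \<in> carrier_mat p q" and Y: "Y \<in> carrier_mat q r" and Z: "Z \<in> carrier_mat r s"
    and i: "i < p" and j: "j < s"
  shows "(X * Y * Z) $$ (i, j) = (\<Sum>k<q. \<Sum>l<r. X $$ (i, k) * Y $$ (k, l) * Z $$ (l, j))"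
proof -
  have "(X * Y * Z) $$ (i, j) = (\<Sum>k<q. X $$ (i, k) * (\<Sum>l<r. Y $$ (k, l) * Z $$ (l, j)))"
    using X Y Z i j by (simp add: scalar_prod_def lessThan_atLeast0)
  also have "\<dots> = (\<Sum>k<q. \<Sum>l<r. X $$ (i, k) * Y $$ (k, l) * Z $$ (l, j))"
    by (simp add: sum_distrib_left mult.assoc)
  finally show ?thesis .
qed

lemma sum_split_mn: "(\<Sum>r<m*(n::nat). g r) = (\<Sum>i<m. \<Sum>a<n. g (i*n+a))"
proof (induction m)
  case 0 then show ?case by simp
next
  case (Suc m)
  have "(\<Sum>r<Suc m * n. g r) = (\<Sum>r<m*n. g r) + (\<Sum>r\<in>{m*n..<m*n+n}. g r)"
    by (simp add: lessThan_atLeast0 sum.atLeastLessThan_concat add.commute)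
  also have "(\<Sum>r\<in>{m*n..<m*n+n}. g r) = (\<Sum>a<n. g (m*n+a))"
    by (simp add: lessThan_atLeast0 sum.shift_bounds_nat_ivl[symmetric] add.commute)
  finally show ?case using Suc by simp
qed

lemma divmod_n: "a < n \<Longrightarrow> (i*n+a) div n = (i::nat) \<and> (i*n+a) mod n = a"
  by auto

lemma idx_eq: "a < n \<Longrightarrow> k < n \<Longrightarrow> (i*n+a = k*n+(k::nat)) \<longleftrightarrow> (i = k \<and> a = k)"
  using divmod_n[of a n i] divmod_n[of k n k] by metis

lemma idx_eq2: "i < m \<Longrightarrow> i0 < m \<Longrightarrow> (i + m*j = i0 + m*(j0::nat)) \<longleftrightarrow> (i = i0 \<and> j = j0)"
  using divmod_n[of i m j] divmod_n[of i0 m j0] by (metis add.commute mult.commute)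

lemma idx_lt: "i < (m::nat) \<Longrightarrow> a < n \<Longrightarrow> i*n+a < m*n"
proof -
  assume i: "i < m" and a: "a < n"
  have "i*n+a < (i+1)*n" using a by simp
  also have "\<dots> \<le> m*n" using i by (intro mult_le_mono1) simp
  finally show ?thesis .
qed

lemma dir1:
  assumes B: "B \<in> carrier_mat n n" and d: "\<forall>i<n. B $$ (i, i) = 1"
    and z: "\<forall>i<n. \<forall>j<n. i \<noteq> j \<and> \<not> E i j \<longrightarrow> B $$ (i, j) = 0"
  shows "haemers_nc n (graph_space n E) \<le> crank B"
proof -
  define P :: "complex mat" where "P = mat (n*n) n (\<lambda>(r,k). if r = k*n+k then 1 else 0)"
  define B' where "B' = P * B * transpose_mat P"
  have P: "P \<in> carrier_mat (n*n) n" unfolding P_def by auto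
  have PT: "transpose_mat P \<in> carrier_mat n (n*n)" using P by auto
  have B'c: "B' \<in> carrier_mat (n*n) (n*n)" unfolding B'_def using P B PT by auto
  have ent: "B' $$ (i*n+a, j*n+b) = (if a = i \<and> b = j then B $$ (i, j) else 0)"
    if i: "i < n" and a: "a < n" and j: "j < n" and b: "b < n" for i a j b
  proof -
    have r1: "i*n+a < n*n" using idx_lt[OF i a] .
    have r2: "j*n+b < n*n" using idx_lt[OF j b] .
    have "B' $$ (i*n+a, j*n+b) = (\<Sum>k<n. \<Sum>l<n. P $$ (i*n+a, k) * B $$ (k, l) * transpose_mat P $$ (l, j*n+b))"
      unfolding B'_def by (rule mult3_index[OF P B PT r1 r2])
    also have "\<dots> = (\<Sum>k<n. \<Sum>l<n. if k = i then (if l = j then (if a = i \<and> b = j then B $$ (k, l) else 0) else 0) else 0)"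
      using r1 r2 a b idx_eq[OF a] idx_eq[OF b] unfolding P_def
      by (intro sum.cong refl) (auto simp: eq_commute[of i] eq_commute[of j])
    also have "\<dots> = (\<Sum>k<n. if k = i then (\<Sum>l<n. if l = j then (if a = i \<and> b = j then B $$ (k, l) else 0) else 0) else 0)"
      by (intro sum.cong refl) auto
    also have "\<dots> = (if a = i \<and> b = j then B $$ (i, j) else 0)"
      using i j by (simp add: sum.delta)
    finally show ?thesis .
  qed
  have "block n B' i j \<in> graph_space n E" if "i < n" "j < n" for i j
    unfolding graph_space_def block_def using that ent z by auto
  moreover have "mat n n (\<lambda>(a, b). \<Sum>i<n. block n B' i i $$ (a, b)) = 1\<^sub>m n"
  proof (rule eq_matI)
    fix a b assume "a < dim_row (1\<^sub>m n)" "b < dim_col (1\<^sub>m n)"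
    then have a: "a < n" and b: "b < n" by auto
    have "(\<Sum>i<n. block n B' i i $$ (a, b)) = (\<Sum>i<n. if i = a then (if a = b then 1 else 0) else 0)"
      unfolding block_def using a b ent d by (intro sum.cong refl) auto
    also have "\<dots> = 1\<^sub>m n $$ (a, b)" using a b by simp
    finally show "mat n n (\<lambda>(a, b). \<Sum>i<n. block n B' i i $$ (a, b)) $$ (a, b) = 1\<^sub>m n $$ (a, b)"
      using a b by simp
  qed auto
  ultimately have "haemers_nc n (graph_space n E) \<le> crank B'"
    unfolding haemers_nc_def using B'c by (intro Least_le) blast
  also have "crank B' \<le> crank B" unfolding B'_def by (rule crank_mult3[OF P B PT])
  finally show ?thesis .
qed

lemma exists_t:
  fixes M :: "nat \<Rightarrow> nat \<Rightarrow> nat \<Rightarrow> complex"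
  assumes nz: "\<forall>a<n. \<exists>i0<m. M a i0 i0 \<noteq> 0"
  shows "\<exists>t. \<forall>a<n. (\<Sum>i<m. \<Sum>j<m. M a i j * t^(i+m*j)) \<noteq> 0"
proof -
  define p where "p a = (\<Sum>i<m. \<Sum>j<m. monom (M a i j) (i+m*j))" for a
  have pe: "poly (p a) t = (\<Sum>i<m. \<Sum>j<m. M a i j * t^(i+m*j))" for a t
    unfolding p_def by (simp add: poly_sum poly_monom)
  have pnz: "p a \<noteq> 0" if a: "a < n" for a
  proof -
    obtain i0 where i0: "i0 < m" "M a i0 i0 \<noteq> 0" using nz a by blast
    have "coeff (p a) (i0 + m*i0) = (\<Sum>i<m. \<Sum>j<m. if i + m*j = i0 + m*i0 then M a i j else 0)"
      unfolding p_def by (simp add: coeff_sum)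
    also have "\<dots> = (\<Sum>i<m. if i = i0 then (\<Sum>j<m. if j = i0 then M a i j else 0) else 0)"
      using idx_eq2[OF _ i0(1)] by (intro sum.cong refl) auto
    also have "\<dots> = M a i0 i0" using i0 by (simp add: sum.delta)
    finally show ?thesis using i0 by auto
  qed
  define q where "q = (\<Prod>a<n. p a)"
  have "q \<noteq> 0" unfolding q_def using pnz by (simp add: prod_zero_iff)
  then have "finite {x. poly q x = 0}" by (rule poly_roots_finite)
  then obtain t where t: "t \<notin> {x. poly q x = 0}"
    using ex_new_if_finite[OF infinite_UNIV_char_0] by blast
  have "\<forall>a<n. poly (p a) t \<noteq> 0" using t unfolding q_def by (simp add: poly_prod prod_zero_iff)
  then show ?thesis using pe by auto
qed

lemma myif: "(x::complex) * (if P then y else 0) = (if P then x * y else 0)"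
  by simp

lemma dir2:
  assumes B: "B \<in> carrier_mat (m*n) (m*n)"
    and blk: "\<forall>i<m. \<forall>j<m. block n B i j \<in> graph_space n E"
    and sm: "mat n n (\<lambda>(a, b). \<Sum>i<m. block n B i i $$ (a, b)) = 1\<^sub>m n"
  shows "haemers_graph n E \<le> crank B"
proof -
  have bz: "B $$ (i*n+a, j*n+b) = 0"
    if "i < m" "j < m" "a < n" "b < n" "a \<noteq> b" "\<not> E a b" for i j a b
  proof -
    have "block n B i j $$ (a, b) = 0" using blk that unfolding graph_space_def by auto
    then show ?thesis using that unfolding block_def by simp
  qed
  have tr: "(\<Sum>i<m. B $$ (i*n+a, i*n+a)) = 1" if a: "a < n" for a
  proof -
    have "mat n n (\<lambda>(a, b). \<Sum>i<m. block n B i i $$ (a, b)) $$ (a, a) = 1\<^sub>m n $$ (a, a)"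
      using sm by simp
    then show ?thesis using a unfolding block_def by simp
  qed
  define Mx where "Mx a i j = B $$ (i*n+a, j*n+a)" for a i j
  have nz: "\<forall>a<n. \<exists>i0<m. Mx a i0 i0 \<noteq> 0"
  proof (intro allI impI, rule ccontr)
    fix a assume a: "a < n" and "\<not> (\<exists>i0<m. Mx a i0 i0 \<noteq> 0)"
    then have "(\<Sum>i<m. B $$ (i*n+a, i*n+a)) = 0" unfolding Mx_def by simp
    then show False using tr[OF a] by simp
  qed
  obtain t where t: "\<forall>a<n. (\<Sum>i<m. \<Sum>j<m. Mx a i j * t^(i+m*j)) \<noteq> 0"
    using exists_t[of n m Mx] nz by blast
  define c where "c b = (\<Sum>i<m. \<Sum>j<m. Mx b i j * t^(i+m*j))" for b
  define X :: "complex mat" where "X = mat n (m*n) (\<lambda>(a,r). if r mod n = a then t^(r div n) else 0)"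
  define Y :: "complex mat" where "Y = mat (m*n) n (\<lambda>(s,b). if s mod n = b then t^(m*(s div n)) / c b else 0)"
  define C where "C = X * B * Y"
  have X: "X \<in> carrier_mat n (m*n)" unfolding X_def by auto
  have Y: "Y \<in> carrier_mat (m*n) n" unfolding Y_def by auto
  have Cc: "C \<in> carrier_mat n n" unfolding C_def using X B Y by auto
  have ent: "C $$ (a, b) = (\<Sum>i<m. \<Sum>j<m. t^i * B $$ (i*n+a, j*n+b) * (t^(m*j) / c b))"
    if a: "a < n" and b: "b < n" for a b
  proof -
    have "C $$ (a, b) = (\<Sum>r<m*n. \<Sum>s<m*n. X $$ (a, r) * B $$ (r, s) * Y $$ (s, b))"
      unfolding C_def by (rule mult3_index[OF X B Y a b])
    also have "\<dots> = (\<Sum>i<m. \<Sum>a'<n. \<Sum>j<m. \<Sum>b'<n. X $$ (a, i*n+a') * B $$ (i*n+a', j*n+b') * Y $$ (j*n+b', b))"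
      by (simp only: sum_split_mn)
    also have "\<dots> = (\<Sum>i<m. \<Sum>a'<n. if a' = a then (\<Sum>j<m. \<Sum>b'<n. if b' = b then t^i * B $$ (i*n+a, j*n+b) * (t^(m*j) / c b) else 0) else 0)"
    proof (intro sum.cong refl)
      fix i a' assume i: "i \<in> {..<m}" and a': "a' \<in> {..<n}"
      have xe: "X $$ (a, i*n+a') = (if a' = a then t^i else 0)"
        unfolding X_def using a i a' idx_lt[of i m a' n] divmod_n[of a' n i] by auto
      have ye: "Y $$ (j*n+b', b) = (if b' = b then t^(m*j) / c b else 0)"
        if j: "j < m" and b': "b' < n" for j b'
        unfolding Y_def using b j b' idx_lt[of j m b' n] divmod_n[of b' n j] by auto
      show "(\<Sum>j<m. \<Sum>b'<n. X $$ (a, i*n+a') * B $$ (i*n+a', j*n+b') * Y $$ (j*n+b', b)) =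
        (if a' = a then (\<Sum>j<m. \<Sum>b'<n. if b' = b then t^i * B $$ (i*n+a, j*n+b) * (t^(m*j) / c b) else 0) else 0)"
        using xe ye by (auto simp: myif sum.delta intro!: sum.cong)
    qed
    also have "\<dots> = (\<Sum>i<m. \<Sum>j<m. t^i * B $$ (i*n+a, j*n+b) * (t^(m*j) / c b))"
      using a b by (simp add: sum.delta)
    finally show ?thesis .
  qed
  have "\<exists>B. B \<in> carrier_mat n n \<and> (\<forall>i<n. B $$ (i, i) = 1)
      \<and> (\<forall>i<n. \<forall>j<n. i \<noteq> j \<and> \<not> E i j \<longrightarrow> B $$ (i, j) = 0) \<and> crank B = crank C"
  proof (intro exI conjI allI impI)
    show "C \<in> carrier_mat n n" by (rule Cc)
    fix a assume a: "a < n"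
    have "C $$ (a, a) = (\<Sum>i<m. \<Sum>j<m. Mx a i j * t^(i+m*j)) / c a"
      unfolding ent[OF a a] Mx_def
      by (simp add: sum_divide_distrib power_add mult_ac)
    then show "C $$ (a, a) = 1" using t a unfolding c_def by simp
  next
    fix a b assume a: "a < n" and b: "b < n" and ab: "a \<noteq> b \<and> \<not> E a b"
    show "C $$ (a, b) = 0" unfolding ent[OF a b] using bz a b ab by simp
  qed simp
  then have "haemers_graph n E \<le> crank C" unfolding haemers_graph_def by (intro Least_le)
  also have "crank C \<le> crank B" unfolding C_def by (rule crank_mult3[OF X B Y])
  finally show ?thesis .
qed


theorem mainTheorem1:
  fixes n :: nat and E :: "nat \<Rightarrow> nat \<Rightarrow> bool"
  assumes "simple_graph n E"
  shows "haemers_nc n (graph_space n E) = haemers_graph n E"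
proof (rule antisym)
  define P where "P r = (\<exists>B. B \<in> carrier_mat n n \<and> (\<forall>i<n. B $$ (i, i) = 1)
      \<and> (\<forall>i<n. \<forall>j<n. i \<noteq> j \<and> \<not> E i j \<longrightarrow> B $$ (i, j) = 0) \<and> crank B = r)" for r
  have hg: "haemers_graph n E = (LEAST r. P r)" unfolding haemers_graph_def P_def by simp
  have "P (crank (1\<^sub>m n))" unfolding P_def
    by (intro exI[of _ "1\<^sub>m n"]) auto
  then have "P (LEAST r. P r)" by (rule LeastI)
  then obtain B where B: "B \<in> carrier_mat n n" "\<forall>i<n. B $$ (i, i) = 1"
      "\<forall>i<n. \<forall>j<n. i \<noteq> j \<and> \<not> E i j \<longrightarrow> B $$ (i, j) = 0" "crank B = haemers_graph n E"
    unfolding P_def hg by blast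
  have "haemers_nc n (graph_space n E) \<le> crank B" by (rule dir1[OF B(1) B(2) B(3)])
  then show "haemers_nc n (graph_space n E) \<le> haemers_graph n E" using B(4) by simp
next
  define Q where "Q r = (\<exists>m B. B \<in> carrier_mat (m * n) (m * n)
      \<and> (\<forall>i<m. \<forall>j<m. block n B i j \<in> graph_space n E)
      \<and> mat n n (\<lambda>(a, b). \<Sum>i<m. block n B i i $$ (a, b)) = 1\<^sub>m n
      \<and> crank B = r)" for r
  have hn: "haemers_nc n (graph_space n E) = (LEAST r. Q r)" unfolding haemers_nc_def Q_def by simp
  have bl: "block n (1\<^sub>m n) 0 0 = 1\<^sub>m n" unfolding block_def by (rule eq_matI) auto
  have "Q (crank (1\<^sub>m n))" unfolding Q_def
  proof (intro exI[of _ "1::nat"] exI[of _ "1\<^sub>m n"] conjI allI impI)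
    fix i j assume "i < (1::nat)" "j < (1::nat)"
    then show "block n (1\<^sub>m n) i j \<in> graph_space n E" using bl unfolding graph_space_def by auto
  next
    show "mat n n (\<lambda>(a, b). \<Sum>i<1. block n (1\<^sub>m n) i i $$ (a, b)) = 1\<^sub>m n"
      using bl by (intro eq_matI) auto
  qed auto
  then have "Q (LEAST r. Q r)" by (rule LeastI)
  then obtain m B where B: "B \<in> carrier_mat (m * n) (m * n)"
      "\<forall>i<m. \<forall>j<m. block n B i j \<in> graph_space n E"
      "mat n n (\<lambda>(a, b). \<Sum>i<m. block n B i i $$ (a, b)) = 1\<^sub>m n"
      "crank B = haemers_nc n (graph_space n E)"
    unfolding Q_def hn by blast
  have "haemers_graph n E \<le> crank B" by (rule dir2[OF B(1) B(2) B(3)])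
  then show "haemers_graph n E \<le> haemers_nc n (graph_space n E)" using B(4) by simp
qed

end
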